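(* Let $f:\mathrm{GF}(p^m)^n\to\mathrm{GF}(p^m)$ be a polynomial function and $I=\{i_1,\ldots,i_k\}\subseteq\{1,\ldots,n\}$. Write $t_I=x_{i_1}\cdots x_{i_k}$ and $f = t_I f_{S(I)} + r$ where every monomial of $r$ misses at least one variable $x_i$ with $i\in I$. Let $\mathbf{v}$ denote the $n$-tuple with $1$ in positions $i_1,\ldots,i_k$ and the indeterminates $x_j$ in the other positions, and $\mathbf{u}$ the $n$-tuple with $0$ in positions $i_1,\ldots,i_k$ and indeterminates elsewhere. Define \[ f_I = \sum_{(b_1,\ldots,b_k)\in\{0,1\}^k} (-1)^{k-(b_1+\cdots+b_k)} f|_{x_{i_1}=b_1,\ldots,x_{i_k}=b_k}, \] a function of the variables $x_j$, $j\notin I$. Then \[ f_I = (\Delta^{(k)}_{\mathbf{e}_{i_1},\ldots,\mathbf{e}_{i_k}} f)(\mathbf{u}) = f_{S(I)}(\mathbf{v}). \]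
   Context: Every function $\mathrm{GF}(q)^n\to\mathrm{GF}(q)$ is represented uniquely by a polynomial of degree at most $q-1$ in each variable; the decomposition $f=t_If_{S(I)}+r$ refers to this representative ($f_{S(I)}$ may involve the variables with index in $I$). $\mathbf e_i$ is the $i$-th standard basis vector, $(\Delta_{\mathbf{a}} f)(\mathbf{x}) = f(\mathbf{x}+\mathbf{a})-f(\mathbf{x})$, and $\Delta^{(k)}_{\mathbf{a}_1,\ldots,\mathbf{a}_k}=\Delta_{\mathbf{a}_1}\cdots\Delta_{\mathbf{a}_k}$. *)

theory Defs
  imports "HOL-Library.FuncSet"
begin

text \<open>Points of GF(q)^n are functions from a finite index type 'n to the field 'a.
  Exponent vectors are functions 'n => nat.\<close>

definition red_exps :: "nat \<Rightarrow> ('n::finite \<Rightarrow> nat) set" where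
  "red_exps q = {e. \<forall>i. e i \<le> q - 1}"

definition monom_eval :: "('n::finite \<Rightarrow> nat) \<Rightarrow> ('n \<Rightarrow> 'a::comm_ring_1) \<Rightarrow> 'a" where
  "monom_eval e x = (\<Prod>i\<in>UNIV. x i ^ e i)"

definition poly_fun :: "(('n::finite \<Rightarrow> nat) \<Rightarrow> 'a::{field,finite}) \<Rightarrow> ('n \<Rightarrow> 'a) \<Rightarrow> 'a" where
  "poly_fun c x = (\<Sum>e\<in>red_exps (card (UNIV :: 'a set)). c e * monom_eval e x)"

text \<open>The polynomial function of f_{S(I)}, where f = t_I f_{S(I)} + r and
  every monomial of r misses some x_i with i in I: collect the monomials divisible
  by t_I and divide them by t_I.\<close>
definition fSI :: "(('n::finite \<Rightarrow> nat) \<Rightarrow> 'a::{field,finite}) \<Rightarrow> 'n set \<Rightarrow> ('n \<Rightarrow> 'a) \<Rightarrow> 'a" where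
  "fSI c I y = (\<Sum>e\<in>{e\<in>red_exps (card (UNIV :: 'a set)). \<forall>i\<in>I. 1 \<le> e i}.
      c e * (\<Prod>i\<in>UNIV. y i ^ (if i \<in> I then e i - 1 else e i)))"

definition std_basis :: "'n \<Rightarrow> 'n \<Rightarrow> 'a::zero_neq_one" where
  "std_basis i = (\<lambda>j. if j = i then 1 else 0)"

definition fdelta :: "('n \<Rightarrow> 'a::ab_group_add) \<Rightarrow> (('n \<Rightarrow> 'a) \<Rightarrow> 'a) \<Rightarrow> ('n \<Rightarrow> 'a) \<Rightarrow> 'a" where
  "fdelta a f = (\<lambda>x. f (\<lambda>j. x j + a j) - f x)"

fun fdelta_iter :: "('n \<Rightarrow> 'a::ab_group_add) list \<Rightarrow> (('n \<Rightarrow> 'a) \<Rightarrow> 'a) \<Rightarrow> ('n \<Rightarrow> 'a) \<Rightarrow> 'a" where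
  "fdelta_iter [] f = f"
| "fdelta_iter (a # as) f = fdelta a (fdelta_iter as f)"

text \<open>f_I(x) = sum over (b_1..b_k) in {0,1}^k of (-1)^(k - sum b) f|_{x_{i_j} = b_j};
  the result depends only on the coordinates of x outside I.\<close>
definition f_I :: "(('n \<Rightarrow> 'a::comm_ring_1) \<Rightarrow> 'a) \<Rightarrow> 'n set \<Rightarrow> ('n \<Rightarrow> 'a) \<Rightarrow> 'a" where
  "f_I f I x = (\<Sum>b\<in>(I \<rightarrow>\<^sub>E {0::nat, 1}).
      (-1) ^ (card I - (\<Sum>i\<in>I. b i)) * f (\<lambda>j. if j \<in> I then of_nat (b j) else x j))"

end

theory Submission imports Defs begin

lemma sum_Pow_insert:
  assumes "finite A" "a \<notin> A"
  shows "(\<Sum>S\<in>Pow (insert a A). g S) = (\<Sum>S\<in>Pow A. g S) + (\<Sum>S\<in>Pow A. g (insert a S))"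
proof -
  have inj: "inj_on (insert a) (Pow A)"
    using assms(2) by (auto simp: inj_on_def)
  have disj: "Pow A \<inter> insert a ` Pow A = {}" using assms(2) by auto
  show ?thesis
    unfolding Pow_insert
    by (subst sum.union_disjoint) (use assms disj inj in \<open>auto simp: sum.reindex\<close>)
qed

lemma delta_sub:
  fixes f :: "('n \<Rightarrow> 'a::comm_ring_1) \<Rightarrow> 'a"
  assumes "distinct is"
  shows "fdelta_iter (map std_basis is) f y
     = (\<Sum>S\<in>Pow (set is). (-1)^(length is - card S) * f (\<lambda>j. y j + (if j\<in>S then 1 else 0)))"
  using assms
proof (induction "is" arbitrary: y)
  case Nil
  then show ?case by simp
next
  case (Cons a as)
  let ?n = "length as"
  have an: "a \<notin> set as" and d: "distinct as" using Cons.prems by auto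
  have cardle: "\<And>S. S \<in> Pow (set as) \<Longrightarrow> card S \<le> ?n"
    by (metis PowD List.finite_set card_mono card_length order_trans)
  have "fdelta_iter (map std_basis (a # as)) f y
     = (\<Sum>S\<in>Pow (set as). (-1)^(?n - card S) * f (\<lambda>j. y j + std_basis a j + (if j\<in>S then 1 else 0)))
      - (\<Sum>S\<in>Pow (set as). (-1)^(?n - card S) * f (\<lambda>j. y j + (if j\<in>S then 1 else 0)))"
    using Cons.IH[OF d] by (simp add: fdelta_def add.assoc)
  also have "(\<Sum>S\<in>Pow (set as). (-1)^(?n - card S) * f (\<lambda>j. y j + std_basis a j + (if j\<in>S then 1 else 0)))
     = (\<Sum>S\<in>Pow (set as). (-1)^(Suc ?n - card (insert a S)) * f (\<lambda>j. y j + (if j\<in>insert a S then 1 else 0)))"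
  proof (rule sum.cong[OF refl])
    fix S assume S: "S \<in> Pow (set as)"
    then have "a \<notin> S" using an by auto
    moreover have "finite S" using S finite_subset by auto
    ultimately show "(-1)^(?n - card S) * f (\<lambda>j. y j + std_basis a j + (if j\<in>S then 1 else 0))
       = (-1)^(Suc ?n - card (insert a S)) * f (\<lambda>j. y j + (if j\<in>insert a S then 1 else 0))"
    proof -
      have "(\<lambda>j. y j + std_basis a j + (if j\<in>S then 1 else 0)) = (\<lambda>j. y j + (if j\<in>insert a S then 1 else 0))"
        using \<open>a \<notin> S\<close> by (auto simp: std_basis_def)
      then show ?thesis using \<open>a \<notin> S\<close> \<open>finite S\<close> by simp
    qed
  qed
  also have "- (\<Sum>S\<in>Pow (set as). (-1)^(?n - card S) * f (\<lambda>j. y j + (if j\<in>S then 1 else 0)))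
     = (\<Sum>S\<in>Pow (set as). (-1)^(Suc ?n - card S) * f (\<lambda>j. y j + (if j\<in>S then 1 else 0)))"
    unfolding sum_negf[symmetric]
  proof (rule sum.cong[OF refl])
    fix S assume "S \<in> Pow (set as)"
    then have "Suc ?n - card S = Suc (?n - card S)" using cardle by (simp add: Suc_diff_le)
    then show "- ((-1)^(?n - card S) * f (\<lambda>j. y j + (if j\<in>S then 1 else 0)))
       = (-1)^(Suc ?n - card S) * f (\<lambda>j. y j + (if j\<in>S then 1 else 0))" by simp
  qed
  ultimately show ?case
    using sum_Pow_insert[OF List.finite_set an, of "\<lambda>S. (-1)^(Suc ?n - card S) * f (\<lambda>j. y j + (if j\<in>S then 1 else 0))"]
    by (simp add: diff_conv_add_uminus add.commute)
qed

lemma fI_sub: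
  fixes f :: "('n \<Rightarrow> 'a::comm_ring_1) \<Rightarrow> 'a"
  assumes fin: "finite I"
  shows "f_I f I x = (\<Sum>S\<in>Pow I. (-1)^(card I - card S) * f (\<lambda>j. if j\<in>I then (if j\<in>S then 1 else 0) else x j))"
  unfolding f_I_def
proof (rule sum.reindex_bij_witness[where j="\<lambda>b. {i\<in>I. b i = 1}" and i="\<lambda>S i. if i\<in>I then (if i\<in>S then 1 else 0) else undefined"])
  fix S assume "S \<in> Pow I"
  then show "{i \<in> I. (if i\<in>I then (if i\<in>S then 1 else 0) else undefined) = (1::nat)} = S" by (auto split: if_splits)
next
  fix S assume "S \<in> Pow I"
  then show "(\<lambda>i. if i\<in>I then (if i\<in>S then 1 else 0::nat) else undefined) \<in> I \<rightarrow>\<^sub>E {0, 1}" by (auto split: if_splits)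
next
  fix b :: "'n \<Rightarrow> nat" assume b: "b \<in> I \<rightarrow>\<^sub>E {0, 1}"
  show "(\<lambda>i. if i\<in>I then (if i\<in>{i\<in>I. b i = 1} then 1 else 0) else undefined) = b"
  proof
    fix i show "(if i\<in>I then (if i\<in>{i\<in>I. b i = 1} then 1 else 0) else undefined) = b i"
      using b by (cases "i \<in> I") (auto simp: PiE_def extensional_def)
  qed
next
  fix b :: "'n \<Rightarrow> nat" assume b: "b \<in> I \<rightarrow>\<^sub>E {0, 1}"
  then show "{i\<in>I. b i = 1} \<in> Pow I" by auto
next
  fix b :: "'n \<Rightarrow> nat" assume b: "b \<in> I \<rightarrow>\<^sub>E {0, 1}"
  have "(\<Sum>i\<in>I. b i) = (\<Sum>i\<in>I. if b i = 1 then 1 else 0)"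
    using b by (intro sum.cong) auto
  also have "\<dots> = card {i\<in>I. b i = 1}"
    using fin by (simp add: sum.If_cases Int_def)
  finally have c: "(\<Sum>i\<in>I. b i) = card {i\<in>I. b i = 1}" .
  have e: "(\<lambda>j. if j\<in>I then (of_nat (b j)::'a) else x j) = (\<lambda>j. if j\<in>I then (if j\<in>{i\<in>I. b i = 1} then 1 else 0) else x j)"
  proof
    fix j
    show "(if j\<in>I then (of_nat (b j)::'a) else x j) = (if j\<in>I then (if j\<in>{i\<in>I. b i = 1} then 1 else 0) else x j)"
    proof (cases "j \<in> I")
      case True then have "b j = 0 \<or> b j = 1" using b by auto
      then show ?thesis by auto
    qed simp
  qed
  show "(-1)^(card I - card {i\<in>I. b i = 1}) * f (\<lambda>j. if j\<in>I then (if j\<in>{i\<in>I. b i = 1} then 1 else 0) else x j)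
     = (-1)^(card I - (\<Sum>i\<in>I. b i)) * f (\<lambda>j. if j\<in>I then of_nat (b j) else x j)"
    by (simp add: c e)
qed

lemma key:
  assumes fin: "finite I"
  shows "(\<Sum>S\<in>Pow I. (-1)^(card I - card S) * (\<Prod>i\<in>I. (if i\<in>S then 1 else 0)^e i))
       = (if \<forall>i\<in>I. 1 \<le> e i then 1 else (0::'a::comm_ring_1))"
proof -
  have "(if \<forall>i\<in>I. 1 \<le> e i then 1 else (0::'a)) = (\<Prod>i\<in>I. 1 + - (0^e i))"
  proof (cases "\<forall>i\<in>I. 1 \<le> e i")
    case True
    then have "\<forall>i\<in>I. 1 + - (0^e i) = (1::'a)" by (auto simp: power_0_left)
    then show ?thesis using True by (simp only: prod.neutral) simp
  next
    case False
    then obtain i where i: "i \<in> I" "e i = 0" by auto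
    then show ?thesis using False fin by (simp add: prod.remove[OF fin i(1)])
  qed
  also have "\<dots> = (\<Sum>X\<in>Pow I. (\<Prod>x\<in>X. 1) * (\<Prod>x\<in>I-X. - (0^e x)))"
    by (rule prod_add[OF fin])
  also have "\<dots> = (\<Sum>S\<in>Pow I. (-1)^(card I - card S) * (\<Prod>i\<in>I. (if i\<in>S then 1 else 0)^e i))"
  proof (rule sum.cong[OF refl])
    fix S assume S: "S \<in> Pow I"
    then have sub: "S \<subseteq> I" by auto
    have "(\<Prod>i\<in>I. (if i\<in>S then 1 else 0::'a)^e i) = (\<Prod>i\<in>I-S. (if i\<in>S then 1 else 0)^e i) * (\<Prod>i\<in>S. (if i\<in>S then 1 else 0)^e i)"
      by (rule prod.subset_diff[OF sub fin])
    also have "\<dots> = (\<Prod>i\<in>I-S. 0^e i)" by simp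
    finally show "(\<Prod>x\<in>S. 1) * (\<Prod>x\<in>I-S. - (0^e x)) = (-1)^(card I - card S) * (\<Prod>i\<in>I. (if i\<in>S then 1 else 0::'a)^e i)"
      using sub fin by (simp add: prod_uminus card_Diff_subset finite_subset)
  qed
  finally show ?thesis by simp
qed

lemma fin_red: "finite (red_exps q :: ('n::finite \<Rightarrow> nat) set)"
proof (rule finite_subset)
  show "red_exps q \<subseteq> PiE (UNIV::'n set) (\<lambda>_. {..q-1})"
    by (auto simp: red_exps_def PiE_def extensional_def)
  show "finite (PiE (UNIV::'n set) (\<lambda>_. {..q-1}))" by (rule finite_PiE) auto
qed

theorem mainTheorem3:
  fixes f :: "('n::finite \<Rightarrow> 'a::{field,finite}) \<Rightarrow> 'a"
    and c :: "('n \<Rightarrow> nat) \<Rightarrow> 'a"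
    and "is" :: "'n list"
  assumes rep: "f = poly_fun c"
    and red: "\<And>e. e \<notin> red_exps (card (UNIV :: 'a set)) \<Longrightarrow> c e = 0"
    and dist: "distinct is"
  shows "\<forall>x. f_I f (set is) x
             = fdelta_iter (map std_basis is) f (\<lambda>j. if j \<in> set is then 0 else x j)
           \<and> f_I f (set is) x = fSI c (set is) (\<lambda>j. if j \<in> set is then 1 else x j)"
proof
  fix x :: "'n \<Rightarrow> 'a"
  define I where "I = set is"
  have fin: "finite I" unfolding I_def by simp
  define pt where "pt S = (\<lambda>j. if j\<in>I then (if j\<in>S then 1 else 0) else x j)" for S
  define sg where "sg (S::'n set) = ((-1::'a)^(card I - card S))" for S
  have sub: "f_I f I x = (\<Sum>S\<in>Pow I. sg S * f (pt S))"
    unfolding sg_def pt_def by (rule fI_sub[OF fin])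
  have A: "f_I f I x = fdelta_iter (map std_basis is) f (\<lambda>j. if j \<in> I then 0 else x j)"
    unfolding sub delta_sub[OF dist]
    using distinct_card[OF dist]
    by (intro sum.cong) (auto simp: I_def sg_def pt_def intro!: arg_cong[where f=f] ext)
  define R where "R = (red_exps (card (UNIV :: 'a set)) :: ('n \<Rightarrow> nat) set)"
  have finR: "finite R" unfolding R_def by (rule fin_red)
  define P where "P e = (\<Prod>i\<in>-I. x i ^ e i)" for e :: "'n \<Rightarrow> nat"
  have me: "monom_eval e (pt S) = (\<Prod>i\<in>I. (if i\<in>S then 1 else 0)^e i) * P e" for e S
  proof -
    have "(\<lambda>i. pt S i ^ e i) = (\<lambda>i. if i\<in>I then (if i\<in>S then 1 else 0)^e i else x i ^ e i)"
      by (auto simp: pt_def)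
    then have "monom_eval e (pt S) = (\<Prod>i\<in>UNIV. if i\<in>I then (if i\<in>S then 1 else 0)^e i else x i ^ e i)"
      unfolding monom_eval_def by (simp only:)
    also have "\<dots> = (\<Prod>i\<in>UNIV \<inter> I. (if i\<in>S then 1 else 0)^e i) * (\<Prod>i\<in>UNIV \<inter> - I. x i ^ e i)"
      using prod.If_cases[of "UNIV::'n set" "\<lambda>i. i\<in>I" "\<lambda>i. (if i\<in>S then 1 else 0)^e i" "\<lambda>i. x i ^ e i"]
      by simp
    finally show ?thesis unfolding P_def by simp
  qed
  have "f_I f I x = (\<Sum>S\<in>Pow I. sg S * (\<Sum>e\<in>R. c e * monom_eval e (pt S)))"
    using sub unfolding rep poly_fun_def R_def by simp
  also have "\<dots> = (\<Sum>e\<in>R. c e * ((\<Sum>S\<in>Pow I. sg S * (\<Prod>i\<in>I. (if i\<in>S then 1 else 0)^e i)) * P e))"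
    by (simp add: me sum_distrib_left sum_distrib_right sum.swap[where A="Pow I"] mult.assoc mult.left_commute)
  also have "\<dots> = (\<Sum>e\<in>R. if \<forall>i\<in>I. 1 \<le> e i then c e * P e else 0)"
    unfolding sg_def key[OF fin] by (intro sum.cong) auto
  also have "\<dots> = (\<Sum>e\<in>{e\<in>R. \<forall>i\<in>I. 1 \<le> e i}. c e * P e)"
    by (rule sum.inter_filter[OF finR, symmetric])
  also have "\<dots> = fSI c I (\<lambda>j. if j \<in> I then 1 else x j)"
    unfolding fSI_def R_def
    by (intro sum.cong refl arg_cong[where f="\<lambda>v. c _ * v"]) (simp add: P_def prod.If_cases Int_def if_distrib Compl_eq)
  finally show "f_I f (set is) x
             = fdelta_iter (map std_basis is) f (\<lambda>j. if j \<in> set is then 0 else x j)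
           \<and> f_I f (set is) x = fSI c (set is) (\<lambda>j. if j \<in> set is then 1 else x j)"
    using A unfolding I_def by simp
qed

end
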